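(* Fix an integer $d>1$. For every $\epsilon\in(0,1)$ there is $\rho_0$ such that for all $\rho>\rho_0$: if $p$ is a monic polynomial of degree $d$, $g=p\circ\exp$ satisfies $\operatorname{SV}(g)\subset\mathbb{D}_\rho(0)$, and $\alpha\in\mathbb{D}_{2\rho}(0)$ satisfies $\operatorname{dist}(\alpha,\operatorname{SV}(g))>\epsilon$, then every pair of distinct $w_1,w_2\in g^{-1}(\alpha)$ satisfies $|w_1-w_2|>(\epsilon/\rho)^{d^4}$.
   Context: $\mathcal{N}_d$ is the set of functions $p\circ\exp$ with $p$ a monic polynomial of degree $d$. $\operatorname{SV}(g)$ denotes the set of finite singular values (critical and asymptotic values) of $g$. $\operatorname{dist}$ is Euclidean distance. *)

theory Defs
  imports "HOL-Complex_Analysis.Complex_Analysis" "HOL-Computational_Algebra.Polynomial"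
begin

definition critical_values :: "(complex \<Rightarrow> complex) \<Rightarrow> complex set" where
  "critical_values f = {f z | z. deriv f z = 0}"

definition asymptotic_values :: "(complex \<Rightarrow> complex) \<Rightarrow> complex set" where
  "asymptotic_values f = {a. \<exists>\<gamma>::real \<Rightarrow> complex. continuous_on {0..} \<gamma> \<and>
       filterlim (\<lambda>t. norm (\<gamma> t)) at_top at_top \<and>
       ((\<lambda>t. f (\<gamma> t)) \<longlongrightarrow> a) at_top}"

definition SV :: "(complex \<Rightarrow> complex) \<Rightarrow> complex set" where
  "SV f = critical_values f \<union> asymptotic_values f"

end

theory Submission
  imports Defs "HOL-Computational_Algebra.Fundamental_Theorem_Algebra"
begin

definition Qf :: "nat \<Rightarrow> (nat \<Rightarrow> complex) \<Rightarrow> complex \<Rightarrow> complex" where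
  "Qf n x v = (\<Sum>S\<in>Pow {..<n}. (\<Prod>j\<in>S. - x j) * (of_nat (Suc n) / of_nat (n - card S + 1)) * v ^ (n - card S + 1))"

definition Pq :: "nat \<Rightarrow> (nat \<Rightarrow> complex) \<Rightarrow> complex poly" where
  "Pq n x = (\<Sum>S\<in>Pow {..<n}. monom ((\<Prod>j\<in>S. - x j) * (of_nat (Suc n) / of_nat (n - card S + 1))) (n - card S + 1))"

lemma poly_Pq: "poly (Pq n x) v = Qf n x v"
  by (simp add: Pq_def Qf_def poly_sum poly_monom)

lemma Qf_0: "Qf n x 0 = 0"
  by (simp add: Qf_def)

lemma card_le_n: "S \<in> Pow {..<n} \<Longrightarrow> card S \<le> n"
  by (metis PowD card_lessThan card_mono finite_lessThan)

lemma DERIV_term: "DERIV (\<lambda>v. (a::complex) * (of_nat (Suc n) / of_nat (k + 1)) * v ^ (k + 1)) v :> a * of_nat (Suc n) * v ^ k"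
proof -
  have "DERIV (\<lambda>v. a * (of_nat (Suc n) / of_nat (k + 1)) * v ^ (k + 1)) v :> a * (of_nat (Suc n) / of_nat (k + 1)) * (of_nat (k+1) * v ^ k)"
    using DERIV_cmult[OF DERIV_power[OF DERIV_ident, of "k+1" v], of "a * (of_nat (Suc n) / of_nat (k + 1))"] by simp
  moreover have "a * (of_nat (Suc n) / of_nat (k + 1)) * (of_nat (k+1) * v ^ k) = a * of_nat (Suc n) * v ^ k"
    by (simp del: of_nat_Suc of_nat_add add: field_simps)
  ultimately show ?thesis by simp
qed

lemma DERIV_Qf: "DERIV (Qf n x) v :> of_nat (Suc n) * (\<Prod>j<n. v - x j)"
proof -
  have d: "DERIV (Qf n x) v :> (\<Sum>S\<in>Pow {..<n}. (\<Prod>j\<in>S. - x j) * of_nat (Suc n) * v ^ (n - card S))"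
    unfolding Qf_def[abs_def]
    by (rule DERIV_sum) (rule DERIV_term)
  have "(\<Prod>j<n. v - x j) = (\<Prod>j<n. (- x j) + v)" by simp
  also have "\<dots> = (\<Sum>S\<in>Pow {..<n}. (\<Prod>j\<in>S. - x j) * (\<Prod>j\<in>{..<n}-S. v))"
    by (rule prod_add) simp
  also have "\<dots> = (\<Sum>S\<in>Pow {..<n}. (\<Prod>j\<in>S. - x j) * v ^ (n - card S))"
    by (intro sum.cong refl) (simp add: card_Diff_subset finite_subset)
  finally show ?thesis using d by (simp add: sum_distrib_left mult_ac)
qed

lemma poly_linprod: "poly (\<Prod>j<n. [:- x j, 1:]) (v::complex) = (\<Prod>j<n. v - x j)"
  unfolding poly_prod by (intro prod.cong refl) (simp add: algebra_simps)

lemma pderiv_Pq: "pderiv (Pq n x) = smult (of_nat (Suc n)) (\<Prod>j<n. [:- x j, 1:])"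
proof (rule poly_eq_poly_eq_iff[THEN iffD1], rule ext)
  fix v
  have e: "poly (Pq n x) = Qf n x" by (rule ext) (simp add: poly_Pq)
  have "DERIV (Qf n x) v :> poly (pderiv (Pq n x)) v"
    using poly_DERIV[of "Pq n x" v] by (simp add: e)
  then have "poly (pderiv (Pq n x)) v = of_nat (Suc n) * (\<Prod>j<n. v - x j)"
    by (rule DERIV_unique[OF _ DERIV_Qf])
  then show "poly (pderiv (Pq n x)) v = poly (smult (of_nat (Suc n)) (\<Prod>j<n. [:- x j, 1:])) v"
    by (simp only: poly_smult poly_linprod)
qed

lemma Qf_homog: "Qf n (\<lambda>j. t * x j) (t * v) = t ^ Suc n * Qf n x v"
proof -
  have "Qf n (\<lambda>j. t * x j) (t * v) = (\<Sum>S\<in>Pow {..<n}. t ^ Suc n * ((\<Prod>j\<in>S. - x j) * (of_nat (Suc n) / of_nat (n - card S + 1)) * v ^ (n - card S + 1)))"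
    unfolding Qf_def
  proof (intro sum.cong refl)
    fix S assume S: "S \<in> Pow {..<n}"
    have c: "card S \<le> n" using card_le_n[OF S] .
    have fin: "finite S" using S finite_subset by auto
    have "(\<Prod>j\<in>S. - (t * x j)) = (\<Prod>j\<in>S. t * (- x j))" by simp
    also have "\<dots> = t ^ card S * (\<Prod>j\<in>S. - x j)"
      by (simp only: prod.distrib) (simp add: fin)
    finally have a1: "(\<Prod>j\<in>S. - (t * x j)) = t ^ card S * (\<Prod>j\<in>S. - x j)" .
    have a2: "t ^ card S * t ^ (n - card S + 1) = t ^ Suc n"
      using c by (simp flip: power_add)
    show "(\<Prod>j\<in>S. - (t * x j)) * (of_nat (Suc n) / of_nat (n - card S + 1)) * (t * v) ^ (n - card S + 1) =
       t ^ Suc n * ((\<Prod>j\<in>S. - x j) * (of_nat (Suc n) / of_nat (n - card S + 1)) * v ^ (n - card S + 1))"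
      unfolding a1 a2[symmetric] power_mult_distrib by (simp only: mult_ac)
  qed
  also have "\<dots> = t ^ Suc n * Qf n x v" by (simp only: Qf_def sum_distrib_left)
  finally show ?thesis .
qed

lemma count_roots_one:
  fixes P :: "complex poly"
  assumes P0: "pderiv P \<noteq> 0" and roots: "\<And>z. poly (pderiv P) z = 0 \<Longrightarrow> poly P z = 0"
  shows "card {z. poly P z = 0} = 1"
proof -
  have Pn0: "P \<noteq> 0" using P0 by auto
  define T where "T = {z. poly P z = 0}"
  have finT: "finite T" unfolding T_def using poly_roots_finite[OF Pn0] .
  have degP: "degree P = (\<Sum>z\<in>T. order z P)"
    using size_proots_complex[of P] Pn0
    by (simp add: size_multiset_overloaded_eq T_def)
  have "degree (pderiv P) = (\<Sum>z\<in>{z. poly (pderiv P) z = 0}. order z (pderiv P))"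
    using size_proots_complex[of "pderiv P"] P0
    by (simp add: size_multiset_overloaded_eq)
  also have "\<dots> = (\<Sum>z\<in>T. order z (pderiv P))"
    by (rule sum.mono_neutral_left) (use finT roots order_root P0 in \<open>auto simp: T_def\<close>)
  finally have degP': "degree (pderiv P) = (\<Sum>z\<in>T. order z (pderiv P))" .
  have "(\<Sum>z\<in>T. order z P) = (\<Sum>z\<in>T. Suc (order z (pderiv P)))"
    by (intro sum.cong refl) (use order_pderiv[OF Pn0] in \<open>auto simp: T_def\<close>)
  also have "\<dots> = degree (pderiv P) + card T" using degP' by (simp only: sum_Suc)
  finally have "degree P = degree P - 1 + card T" using degP by (simp add: degree_pderiv)
  moreover have "degree P \<ge> 1" using P0 pderiv_eq_0_iff by fastforce
  ultimately show ?thesis unfolding T_def by linarith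
qed

lemma Pq_pos:
  assumes z: "\<forall>j<n. Qf n x (x j) = 0" "Qf n x (x n) = 0"
  shows "\<forall>j\<le>n. x j = 0"
proof -
  define P where "P = Pq n x"
  have dP: "pderiv P = smult (of_nat (Suc n)) (\<Prod>j<n. [:- x j, 1:])"
    unfolding P_def by (rule pderiv_Pq)
  have "(\<Prod>j<n. [:- x j, 1:]) \<noteq> 0" by (simp add: prod_zero_iff)
  moreover have "(of_nat (Suc n)::complex) \<noteq> 0" by (simp only: of_nat_eq_0_iff)
  ultimately have P0: "pderiv P \<noteq> 0" unfolding dP by (simp del: of_nat_Suc)
  have roots: "poly P z = 0" if "poly (pderiv P) z = 0" for z
  proof -
    have "(\<Prod>j<n. z - x j) = 0" using that unfolding dP by (simp add: poly_linprod del: of_nat_Suc)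
    then obtain j where "j < n" "z = x j" by (auto simp: prod_zero_iff)
    thus ?thesis using z by (simp add: P_def poly_Pq)
  qed
  have c1: "card {z. poly P z = 0} = 1" by (rule count_roots_one[OF P0 roots])
  have "0 \<in> {z. poly P z = 0}" by (simp add: P_def poly_Pq Qf_0)
  with c1 have T: "{z. poly P z = 0} = {0}" by (metis card_1_singletonE singletonD)
  show ?thesis
  proof (intro allI impI)
    fix j assume "j \<le> n"
    then consider "j < n" | "j = n" by linarith
    thus "x j = 0"
    proof cases
      case 1 thus ?thesis using z T by (auto simp: P_def poly_Pq set_eq_iff)
    next
      case 2 thus ?thesis using z T by (auto simp: P_def poly_Pq set_eq_iff)
    qed
  qed
qed

definition Gf :: "nat \<Rightarrow> (nat \<Rightarrow> complex) \<Rightarrow> real" where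
  "Gf n x = (\<Sum>j<n. norm (Qf n x (x j))) + norm (Qf n x (x n))"

lemma Gf_nonneg: "Gf n x \<ge> 0"
  by (simp add: Gf_def sum_nonneg)

lemma Qf_cong: "(\<And>j. j < n \<Longrightarrow> x j = y j) \<Longrightarrow> Qf n x = Qf n y"
  unfolding Qf_def
  by (intro ext sum.cong refl arg_cong2[where f="(*)"] prod.cong) auto

lemma Gf_cong: "(\<And>j. j \<le> n \<Longrightarrow> x j = y j) \<Longrightarrow> Gf n x = Gf n y"
proof -
  assume a: "\<And>j. j \<le> n \<Longrightarrow> x j = y j"
  have "Qf n x = Qf n y" by (rule Qf_cong) (use a in auto)
  thus ?thesis unfolding Gf_def using a by simp
qed

lemma Gf_homog: "Gf n (\<lambda>j. t * x j) = norm t ^ Suc n * Gf n x"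
  unfolding Gf_def Qf_homog by (simp add: norm_mult norm_power sum_distrib_left algebra_simps)

lemma cont_coord [continuous_intros]: "continuous_on S (\<lambda>x::nat \<Rightarrow> 'a::topological_space. x i)"
  by (rule continuous_on_subset[OF continuous_on_product_coordinates]) simp

lemma Gf_cont: "continuous_on S (Gf n)"
  unfolding Gf_def[abs_def] Qf_def by (intro continuous_intros)

lemma kappa_exists: "\<exists>\<kappa>>0. \<forall>x. \<forall>j\<le>n. \<kappa> * norm (x j) ^ Suc n \<le> Gf n x"
proof -
  define K0 :: "(nat \<Rightarrow> complex) set" where "K0 = PiE UNIV (\<lambda>i. if i \<le> n then cball 0 1 else {0})"
  have "compactin (product_topology (\<lambda>i. euclidean) UNIV) K0"
    unfolding K0_def compactin_PiE by auto
  hence cK0: "compact K0" by (simp add: euclidean_product_topology)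
  define K where "K = K0 \<inter> (\<Union>j\<in>{..n}. {x. norm (x j) = 1})"
  have "closed (\<Union>j\<in>{..n}. {x::nat\<Rightarrow>complex. norm (x j) = 1})"
    by (intro closed_UN finite_atMost ballI closed_Collect_eq continuous_intros) 
  hence cK: "compact K" unfolding K_def using cK0 by (rule compact_Int_closed[rotated])
  define e :: "nat \<Rightarrow> complex" where "e = (\<lambda>i. if i = 0 then 1 else 0)"
  have "e \<in> K" unfolding K_def K0_def e_def by (auto simp: PiE_UNIV_domain)
  hence Kne: "K \<noteq> {}" by auto
  obtain x0 where x0: "x0 \<in> K" and min: "\<And>y. y \<in> K \<Longrightarrow> Gf n x0 \<le> Gf n y"
    using continuous_attains_inf[OF cK Kne Gf_cont] by blast
  have pos: "Gf n x0 > 0"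
  proof (rule ccontr)
    assume "\<not> Gf n x0 > 0"
    hence g0: "Gf n x0 = 0" using Gf_nonneg[of n x0] by linarith
    have "(\<Sum>j<n. norm (Qf n x0 (x0 j))) = 0 \<and> norm (Qf n x0 (x0 n)) = 0"
      using g0 unfolding Gf_def by (smt (verit) norm_ge_zero sum_nonneg)
    hence "\<forall>j<n. Qf n x0 (x0 j) = 0" "Qf n x0 (x0 n) = 0"
      by (auto simp: sum_nonneg_eq_0_iff)
    hence "\<forall>j\<le>n. x0 j = 0" by (rule Pq_pos)
    moreover obtain j where "j \<le> n" "norm (x0 j) = 1" using x0 unfolding K_def by auto
    ultimately show False by auto
  qed
  show ?thesis
  proof (intro exI[of _ "Gf n x0"] conjI pos allI impI)
    fix x :: "nat \<Rightarrow> complex" and j assume jn: "j \<le> n"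
    define m where "m = Max ((\<lambda>j. norm (x j)) ` {..n})"
    have mj: "norm (x i) \<le> m" if "i \<le> n" for i unfolding m_def using that by (intro Max_ge) auto
    obtain j0 where j0: "j0 \<le> n" "norm (x j0) = m"
    proof -
      have "m \<in> (\<lambda>j. norm (x j)) ` {..n}" unfolding m_def by (intro Max_in) auto
      thus ?thesis using that by auto
    qed
    show "Gf n x0 * norm (x j) ^ Suc n \<le> Gf n x"
    proof (cases "m = 0")
      case True
      hence "x j = 0" using mj[OF jn] by simp
      thus ?thesis using Gf_nonneg[of n x] by simp
    next
      case False
      hence mpos: "m > 0" using j0 norm_ge_zero by (metis less_eq_real_def)
      define y where "y = (\<lambda>i. if i \<le> n then x i / of_real m else 0)"
      have "y \<in> K"
        unfolding K_def K0_def
      proof (intro IntI)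
        show "y \<in> PiE UNIV (\<lambda>i. if i \<le> n then cball 0 1 else {0})"
          using mj mpos by (auto simp: PiE_UNIV_domain y_def norm_divide)
        show "y \<in> (\<Union>j\<in>{..n}. {x. norm (x j) = 1})"
          using j0 mpos by (auto simp: y_def norm_divide intro!: bexI[of _ j0])
      qed
      hence "Gf n x0 \<le> Gf n y" by (rule min)
      have "Gf n x = Gf n (\<lambda>i. of_real m * y i)"
        by (rule Gf_cong) (use mpos in \<open>simp add: y_def\<close>)
      also have "\<dots> = m ^ Suc n * Gf n y" using mpos by (simp add: Gf_homog abs_of_pos del: power_Suc)
      finally have gx: "Gf n x = m ^ Suc n * Gf n y" .
      have "Gf n x0 * norm (x j) ^ Suc n \<le> Gf n x0 * m ^ Suc n"
        using mj[OF jn] pos by (intro mult_left_mono power_mono) auto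
      also have "\<dots> \<le> Gf n y * m ^ Suc n"
        using \<open>Gf n x0 \<le> Gf n y\<close> mpos by (intro mult_right_mono) auto
      finally show ?thesis using gx by (simp add: mult.commute)
    qed
  qed
qed

lemma monic_factor:
  fixes q :: "complex poly"
  assumes "lead_coeff q = 1"
  shows "\<exists>rs. length rs = degree q \<and> q = (\<Prod>j<degree q. [:- (rs ! j), 1:])"
proof -
  obtain rs where rs: "mset rs = proots q" using ex_mset by blast
  have len: "length rs = degree q" using size_proots_complex[of q] rs by (metis size_mset)
  have "q = smult (lead_coeff q) (\<Prod>x\<in>#proots q. [:-x, 1:])"
    by (rule complex_poly_decompose_multiset[symmetric])
  also have "\<dots> = (\<Prod>x\<in>#mset rs. [:-x, 1:])" using assms rs by simp
  also have "\<dots> = prod_list (map (\<lambda>x. [:-x, 1:]) rs)"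
    by (simp add: prod_mset_prod_list flip: mset_map)
  also have "\<dots> = (\<Prod>j<length rs. [:- (rs ! j), 1:])"
    by (simp add: prod.list_conv_set_nth atLeast0LessThan)
  finally show ?thesis using len by auto
qed

lemma poly_factor_root:
  fixes r :: "nat \<Rightarrow> complex"
  assumes "q = (\<Prod>j<k. [:- r j, 1:])" "poly q z = 0"
  shows "\<exists>j<k. z = r j"
  using assms by (auto simp: poly_linprod prod_zero_iff)

lemma SV_p0: "poly p 0 \<in> SV (\<lambda>z. poly p (exp z))"
proof -
  define \<gamma> :: "real \<Rightarrow> complex" where "\<gamma> = (\<lambda>t. complex_of_real (- t))"
  have "continuous_on {0..} \<gamma>" unfolding \<gamma>_def by (intro continuous_intros)
  moreover have "filterlim (\<lambda>t. norm (\<gamma> t)) at_top at_top"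
  proof (rule filterlim_cong[THEN iffD1, OF refl refl _ filterlim_ident])
    show "\<forall>\<^sub>F t in at_top. t = norm (\<gamma> t)"
      unfolding \<gamma>_def using eventually_ge_at_top[of "0::real"] by eventually_elim auto
  qed
  moreover have "((\<lambda>t. poly p (exp (\<gamma> t))) \<longlongrightarrow> poly p 0) at_top"
  proof (intro tendsto_intros)
    have "((\<lambda>t. exp (- t)) \<longlongrightarrow> (0::real)) at_top"
      by (rule filterlim_compose[OF exp_at_bot filterlim_uminus_at_bot_at_top])
    hence "((\<lambda>t. complex_of_real (exp (- t))) \<longlongrightarrow> complex_of_real 0) at_top"
      by (intro tendsto_intros)
    thus "((\<lambda>t. exp (\<gamma> t)) \<longlongrightarrow> 0) at_top" unfolding \<gamma>_def by (simp flip: exp_of_real)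
  qed
  ultimately have "poly p 0 \<in> asymptotic_values (\<lambda>z. poly p (exp z))"
    unfolding asymptotic_values_def by blast
  thus ?thesis unfolding SV_def by blast
qed

lemma SV_crit:
  assumes "poly (pderiv p) c = 0"
  shows "poly p c \<in> SV (\<lambda>z. poly p (exp z))"
proof (cases "c = 0")
  case True thus ?thesis using SV_p0 by simp
next
  case False
  define z where "z = Ln c"
  have ez: "exp z = c" using False unfolding z_def by simp
  have "DERIV (\<lambda>z. poly p (exp z)) z :> poly (pderiv p) (exp z) * exp z"
    by (rule DERIV_chain'[OF DERIV_exp poly_DERIV])
  hence "deriv (\<lambda>z. poly p (exp z)) z = 0" using assms ez by (simp add: DERIV_imp_deriv)
  hence "poly p c \<in> critical_values (\<lambda>z. poly p (exp z))"
    unfolding critical_values_def using ez by force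
  thus ?thesis unfolding SV_def by blast
qed

lemma crit_list:
  fixes p :: "complex poly"
  assumes "lead_coeff p = 1" "degree p = Suc n"
  shows "\<exists>cs. length cs = n \<and> pderiv p = smult (of_nat (Suc n)) (\<Prod>j<n. [:- (cs ! j), 1:])"
proof -
  have nz: "(of_nat (Suc n) :: complex) \<noteq> 0" by (simp only: of_nat_eq_0_iff)
  define q where "q = smult (1 / of_nat (Suc n)) (pderiv p)"
  have dq: "degree (pderiv p) = n" using assms by (simp add: degree_pderiv)
  have "lead_coeff (pderiv p) = of_nat (Suc n)"
    using assms dq by (simp add: coeff_pderiv del: of_nat_Suc)
  hence lq: "lead_coeff q = 1" and degq: "degree q = n" using nz dq by (auto simp: q_def)
  obtain rs where rs: "length rs = degree q" "q = (\<Prod>j<degree q. [:- (rs ! j), 1:])"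
    using monic_factor[OF lq] by blast
  have "pderiv p = smult (of_nat (Suc n)) q" using nz by (simp add: q_def)
  thus ?thesis using rs degq by auto
qed

lemma root_bound:
  fixes p :: "complex poly"
  assumes kap: "\<forall>x. \<forall>j\<le>n. \<kappa> * norm (x j) ^ Suc n \<le> Gf n x"
    and p: "lead_coeff p = 1" "degree p = Suc n"
    and crit: "\<forall>c. poly (pderiv p) c = 0 \<longrightarrow> norm (poly p c - poly p 0) \<le> A"
    and u: "norm (poly p u - poly p 0) \<le> A"
  shows "\<kappa> * norm u ^ Suc n \<le> of_nat (Suc n) * A"
    and "\<forall>c. poly (pderiv p) c = 0 \<longrightarrow> \<kappa> * norm c ^ Suc n \<le> of_nat (Suc n) * A"
proof -
  have nz: "(of_nat (Suc n) :: complex) \<noteq> 0" by (simp only: of_nat_eq_0_iff)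
  obtain cs where cs: "length cs = n" "pderiv p = smult (of_nat (Suc n)) (\<Prod>j<n. [:- (cs ! j), 1:])"
    using crit_list[OF p] by blast
  define x where "x = (\<lambda>j. if j < n then cs ! j else u)"
  have "(\<Prod>j<n. [:- (cs ! j), 1:]) = (\<Prod>j<n. [:- x j, 1:])"
    by (intro prod.cong refl) (simp add: x_def)
  hence "pderiv (p - Pq n x) = 0" using cs by (simp add: pderiv_diff pderiv_Pq)
  then obtain h where h: "p - Pq n x = [:h:]" using pderiv_iszero by blast
  have "h = poly p 0" using arg_cong[OF h, of "\<lambda>q. poly q 0"] by (simp add: poly_Pq Qf_0)
  hence Q: "Qf n x v = poly p v - poly p 0" for v
    using arg_cong[OF h, of "\<lambda>q. poly q v"] by (simp add: poly_Pq algebra_simps)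
  have critj: "poly (pderiv p) (cs ! j) = 0" if "j < n" for j
    using that cs by (auto simp: poly_linprod prod_zero_iff)
  have "Gf n x \<le> (\<Sum>j<n. A) + A"
    unfolding Gf_def Q
  proof (intro add_mono sum_mono)
    fix j assume "j \<in> {..<n}"
    thus "norm (poly p (x j) - poly p 0) \<le> A" using crit critj by (simp add: x_def)
  qed (simp add: x_def u)
  also have "\<dots> = of_nat (Suc n) * A" by (simp add: algebra_simps)
  finally have G: "Gf n x \<le> of_nat (Suc n) * A" .
  show "\<kappa> * norm u ^ Suc n \<le> of_nat (Suc n) * A"
    using kap[rule_format, of n x] G by (simp add: x_def)
  show "\<forall>c. poly (pderiv p) c = 0 \<longrightarrow> \<kappa> * norm c ^ Suc n \<le> of_nat (Suc n) * A"
  proof (intro allI impI)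
    fix c assume "poly (pderiv p) c = 0"
    hence "poly (\<Prod>j<n. [:- (cs ! j), 1:]) c = 0" using cs nz by simp
    then obtain j where j: "j < n" "c = cs ! j" by (auto simp: poly_linprod prod_zero_iff)
    show "\<kappa> * norm c ^ Suc n \<le> of_nat (Suc n) * A"
      using kap[rule_format, of j x] G j by (simp add: x_def)
  qed
qed

lemma sep_bound:
  fixes p :: "complex poly" and \<alpha> u1 u2 :: complex and M \<epsilon> :: real
  assumes p: "lead_coeff p = 1" "degree p = Suc n"
    and crit: "\<forall>c. poly (pderiv p) c = 0 \<longrightarrow> \<epsilon> < norm (poly p c - \<alpha>) \<and> norm c \<le> M"
    and roots: "\<forall>r. poly p r = \<alpha> \<longrightarrow> norm r \<le> M"
    and u: "poly p u1 = \<alpha>" "poly p u2 = \<alpha>" "u1 \<noteq> u2"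
    and eps: "\<epsilon> \<ge> 0" and M: "2 * M \<ge> 1"
  shows "\<epsilon> ^ n \<le> norm (u1 - u2) * (2 * M) ^ (Suc n * Suc n)"
proof -
  define d where "d = Suc n"
  obtain cs where cs: "length cs = n" "pderiv p = smult (of_nat (Suc n)) (\<Prod>j<n. [:- (cs ! j), 1:])"
    using crit_list[OF p] by blast
  define c where "c = (\<lambda>j. cs ! j)"
  define f where "f = p + [:- \<alpha>:]"
  have degf: "degree f = d" unfolding f_def d_def using p by (subst degree_add_eq_left) auto
  have lf: "lead_coeff f = 1" using degf p unfolding f_def d_def by simp
  obtain rs where rs: "length rs = degree f" "f = (\<Prod>j<degree f. [:- (rs ! j), 1:])"
    using monic_factor[OF lf] by blast
  define r where "r = (\<lambda>i. rs ! i)"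
  have fprod: "f = (\<Prod>i<d. [:- r i, 1:])" using rs degf by (simp add: r_def)
  have PF: "poly f v = (\<Prod>i<d. v - r i)" for v unfolding fprod by (rule poly_linprod)
  have pf: "poly f v = poly p v - \<alpha>" for v by (simp add: f_def)
  have PD: "poly (pderiv p) v = of_nat d * (\<Prod>j<n. v - c j)" for v
    using cs by (simp add: poly_linprod c_def d_def del: of_nat_Suc)
  have Mr: "norm (r i) \<le> M" if "i < d" for i
  proof -
    have "poly f (r i) = 0" unfolding PF using that by (auto simp: prod_zero_iff)
    thus ?thesis using roots by (simp add: pf)
  qed
  have cc: "\<epsilon> < norm (poly p (c j) - \<alpha>) \<and> norm (c j) \<le> M" if "j < n" for j
  proof -
    have "poly (pderiv p) (c j) = 0" unfolding PD using that by (auto simp: prod_zero_iff)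
    thus ?thesis using crit by blast
  qed
  obtain i1 where i1: "i1 < d" "u1 = r i1"
    using poly_factor_root[OF fprod, of u1] u by (auto simp: pf)
  obtain i2 where i2: "i2 < d" "u2 = r i2"
    using poly_factor_root[OF fprod, of u2] u by (auto simp: pf)
  have i12: "i1 \<noteq> i2" using i1 i2 u by auto
  define F where "F = (\<lambda>i. norm (poly (pderiv p) (r i)))"
  have ident: "(\<Prod>i<d. F i) = real d ^ d * (\<Prod>j<n. norm (poly f (c j)))"
  proof -
    have "(\<Prod>i<d. F i) = (\<Prod>i<d. real d * (\<Prod>j<n. norm (r i - c j)))"
      unfolding F_def PD by (simp add: norm_mult prod_norm[symmetric])
    also have "\<dots> = real d ^ d * (\<Prod>i<d. \<Prod>j<n. norm (r i - c j))"
      by (simp add: prod.distrib)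
    also have "(\<Prod>i<d. \<Prod>j<n. norm (r i - c j)) = (\<Prod>j<n. \<Prod>i<d. norm (c j - r i))"
      by (subst prod.swap) (simp add: norm_minus_commute)
    also have "\<dots> = (\<Prod>j<n. norm (poly f (c j)))"
      unfolding PF by (simp add: prod_norm[symmetric])
    finally show ?thesis .
  qed
  have low: "\<epsilon> ^ n \<le> (\<Prod>j<n. norm (poly f (c j)))"
  proof -
    have "(\<Prod>j<n. \<epsilon>) \<le> (\<Prod>j<n. norm (poly f (c j)))"
      by (intro prod_mono) (use eps cc in \<open>auto simp: pf less_imp_le\<close>)
    thus ?thesis by simp
  qed
  have dpf: "pderiv f = pderiv p" by (simp add: f_def pderiv_add)
  define F1 where "F1 = (\<Prod>i\<in>{..<d}-{i1}. [:- r i, 1:])"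
  have fe: "f = [:- r i1, 1:] * F1" unfolding fprod F1_def using i1 by (subst prod.remove) auto
  have "pderiv f = [:- r i1, 1:] * pderiv F1 + F1 * pderiv [:- r i1, 1:]" unfolding fe by (rule pderiv_mult)
  moreover have "pderiv [:- r i1, 1:] = 1" by (simp add: pderiv_pCons)
  ultimately have "poly (pderiv f) u1 = poly F1 u1" using i1 by simp
  hence "poly (pderiv p) u1 = poly F1 u1" using dpf by simp
  hence Fi1: "F i1 = (\<Prod>i\<in>{..<d}-{i1}. norm (u1 - r i))"
    unfolding F_def F1_def using i1 by (simp add: poly_linprod poly_prod prod_norm[symmetric])
  have "(\<Prod>i\<in>{..<d}-{i1}. norm (u1 - r i)) = norm (u1 - r i2) * (\<Prod>i\<in>{..<d}-{i1}-{i2}. norm (u1 - r i))"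
    using i2 i12 by (subst prod.remove[of _ i2]) auto
  also have "(\<Prod>i\<in>{..<d}-{i1}-{i2}. norm (u1 - r i)) \<le> (\<Prod>i\<in>{..<d}-{i1}-{i2}. 2 * M)"
  proof (intro prod_mono conjI norm_ge_zero)
    fix i assume "i \<in> {..<d}-{i1}-{i2}"
    hence "norm (r i) \<le> M" "norm u1 \<le> M" using Mr i1 by auto
    thus "norm (u1 - r i) \<le> 2 * M" using norm_triangle_ineq4[of u1 "r i"] by linarith
  qed
  also have "(\<Prod>i\<in>{..<d}-{i1}-{i2}. 2 * M) = (2 * M) ^ (d - 2)"
    using i1 i2 i12 by (simp add: card_Diff_subset numeral_2_eq_2)
  finally have bF1: "F i1 \<le> norm (u1 - u2) * (2 * M) ^ (d - 2)"
    using Fi1 i2 by (simp add: mult_left_mono)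
  have bFi: "F i \<le> real d * (2 * M) ^ n" if "i < d" for i
  proof -
    have Fe: "F i = real d * (\<Prod>j<n. norm (r i - c j))" unfolding F_def PD by (simp add: norm_mult prod_norm[symmetric])
    have "(\<Prod>j<n. norm (r i - c j)) \<le> (\<Prod>j<n. 2 * M)"
    proof (intro prod_mono conjI norm_ge_zero)
      fix j assume "j \<in> {..<n}"
      hence "norm (c j) \<le> M" "norm (r i) \<le> M" using cc Mr that by auto
      thus "norm (r i - c j) \<le> 2 * M" using norm_triangle_ineq4[of "r i" "c j"] by linarith
    qed
    thus ?thesis unfolding Fe by (simp add: mult_left_mono)
  qed
  have "(\<Prod>i<d. F i) = F i1 * (\<Prod>i\<in>{..<d}-{i1}. F i)" using i1 by (subst prod.remove[of _ i1]) auto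
  also have "\<dots> \<le> (norm (u1 - u2) * (2 * M) ^ (d - 2)) * (\<Prod>i\<in>{..<d}-{i1}. real d * (2 * M) ^ n)"
    using bF1 bFi M by (intro mult_mono prod_mono) (auto simp: F_def prod_nonneg)
  also have "(\<Prod>i\<in>{..<d}-{i1}. real d * (2 * M) ^ n) = (real d * (2 * M) ^ n) ^ n"
    using i1 by (simp add: card_Diff_subset d_def)
  finally have up: "(\<Prod>i<d. F i) \<le> norm (u1 - u2) * (2 * M) ^ (d - 2) * (real d * (2 * M) ^ n) ^ n" .
  have Mpos: "2 * M > 0" using M by linarith
  have "real d * real d ^ n * \<epsilon> ^ n \<le> real d ^ d * (\<Prod>j<n. norm (poly f (c j)))"
    using low by (simp add: d_def mult_left_mono)
  also have "\<dots> \<le> norm (u1 - u2) * (2 * M) ^ (d - 2) * (real d * (2 * M) ^ n) ^ n"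
    using ident up by simp
  also have "\<dots> = real d ^ n * (norm (u1 - u2) * (2 * M) ^ (d - 2 + n * n))"
    by (simp add: power_mult_distrib power_add power_mult mult_ac)
  finally have "real d ^ n * (real d * \<epsilon> ^ n) \<le> real d ^ n * (norm (u1 - u2) * (2 * M) ^ (d - 2 + n * n))"
    by (simp add: mult_ac)
  hence "real d * \<epsilon> ^ n \<le> norm (u1 - u2) * (2 * M) ^ (d - 2 + n * n)"
    by (rule mult_left_le_imp_le) (simp add: d_def)
  moreover have "\<epsilon> ^ n \<le> real d * \<epsilon> ^ n"
    using eps mult_right_mono[of 1 "real d" "\<epsilon> ^ n"] by (simp add: d_def)
  moreover have "(2 * M) ^ (d - 2 + n * n) \<le> (2 * M) ^ (Suc n * Suc n)"
    using M by (intro power_increasing) (auto simp: d_def)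
  ultimately show ?thesis by (smt (verit) mult_left_mono norm_ge_zero)
qed

lemma pow_bound:
  fixes z \<kappa> \<rho> :: real
  assumes "\<kappa> > 0" "d \<ge> 1" "\<rho> \<ge> 1" "z \<ge> 0" "\<kappa> * z ^ d \<le> real d * (3 * \<rho>)"
  shows "z \<le> max 1 (3 * real d / \<kappa>) * \<rho>"
proof (cases "z \<le> 1")
  case True
  have "1 * 1 \<le> max 1 (3 * real d / \<kappa>) * \<rho>" using assms by (intro mult_mono) auto
  thus ?thesis using True by linarith
next
  case False
  have "z = z ^ 1" by simp
  also have "\<dots> \<le> z ^ d" using False assms by (intro power_increasing) auto
  also have "\<dots> \<le> (3 * real d / \<kappa>) * \<rho>" using assms by (simp add: field_simps)
  also have "\<dots> \<le> max 1 (3 * real d / \<kappa>) * \<rho>" using assms by (intro mult_right_mono) auto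
  finally show ?thesis .
qed

theorem lemmaA4:
  fixes d :: nat
  assumes "d > 1"
  shows "\<forall>\<epsilon>::real. 0 < \<epsilon> \<and> \<epsilon> < 1 \<longrightarrow>
    (\<exists>\<rho>0::real. \<forall>\<rho>>\<rho>0. \<forall>(p::complex poly) (\<alpha>::complex) w1 w2.
       lead_coeff p = 1 \<longrightarrow> degree p = d \<longrightarrow>
       SV (\<lambda>z. poly p (exp z)) \<subseteq> ball 0 \<rho> \<longrightarrow>
       \<alpha> \<in> ball 0 (2 * \<rho>) \<longrightarrow>
       infdist \<alpha> (SV (\<lambda>z. poly p (exp z))) > \<epsilon> \<longrightarrow>
       poly p (exp w1) = \<alpha> \<longrightarrow> poly p (exp w2) = \<alpha> \<longrightarrow> w1 \<noteq> w2 \<longrightarrow>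
       cmod (w1 - w2) > (\<epsilon> / \<rho>) ^ (d ^ 4))"
proof (intro allI impI)
  fix \<epsilon> :: real assume \<epsilon>: "0 < \<epsilon> \<and> \<epsilon> < 1"
  define n where "n = d - 1"
  have dn: "d = Suc n" using assms by (simp add: n_def)
  obtain \<kappa> where \<kappa>: "\<kappa> > 0" and kap: "\<forall>x. \<forall>j\<le>n. \<kappa> * norm (x j) ^ Suc n \<le> Gf n x"
    using kappa_exists by blast
  define B where "B = max 1 (3 * real d / \<kappa>)"
  have B1: "B \<ge> 1" by (simp add: B_def)
  define k where "k = d * d + 1"
  define \<rho>0 where "\<rho>0 = (2 * B) ^ k + 2"
  show "\<exists>\<rho>0::real. \<forall>\<rho>>\<rho>0. \<forall>(p::complex poly) (\<alpha>::complex) w1 w2.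
       lead_coeff p = 1 \<longrightarrow> degree p = d \<longrightarrow>
       SV (\<lambda>z. poly p (exp z)) \<subseteq> ball 0 \<rho> \<longrightarrow>
       \<alpha> \<in> ball 0 (2 * \<rho>) \<longrightarrow>
       infdist \<alpha> (SV (\<lambda>z. poly p (exp z))) > \<epsilon> \<longrightarrow>
       poly p (exp w1) = \<alpha> \<longrightarrow> poly p (exp w2) = \<alpha> \<longrightarrow> w1 \<noteq> w2 \<longrightarrow>
       cmod (w1 - w2) > (\<epsilon> / \<rho>) ^ (d ^ 4)"
  proof (intro exI[of _ \<rho>0] allI impI)
    fix \<rho> :: real and p :: "complex poly" and \<alpha> w1 w2 :: complex
    assume \<rho>: "\<rho>0 < \<rho>" and lc: "lead_coeff p = 1" and dg: "degree p = d"
      and sv: "SV (\<lambda>z. poly p (exp z)) \<subseteq> ball 0 \<rho>" and al: "\<alpha> \<in> ball 0 (2 * \<rho>)"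
      and inf: "infdist \<alpha> (SV (\<lambda>z. poly p (exp z))) > \<epsilon>"
      and e1: "poly p (exp w1) = \<alpha>" and e2: "poly p (exp w2) = \<alpha>" and ne: "w1 \<noteq> w2"
    have "(2 * B) ^ k \<ge> 0" using B1 by simp
    hence \<rho>2: "\<rho> > 2" using \<rho> unfolding \<rho>0_def by linarith
    define \<delta> where "\<delta> = \<epsilon> / \<rho>"
    have \<delta>: "0 < \<delta>" "\<delta> < 1 / 2" using \<epsilon> \<rho>2 by (auto simp: \<delta>_def field_simps)
    have d4: "d ^ 4 \<ge> 1" using assms by simp
    have \<delta>p: "\<delta> ^ (d ^ 4) \<le> \<delta>"
      using \<delta> d4 power_decreasing[of 1 "d ^ 4" \<delta>] by simp
    have svp: "norm s < \<rho> \<and> \<epsilon> < norm (s - \<alpha>)" if "s \<in> SV (\<lambda>z. poly p (exp z))" for s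
    proof
      show "norm s < \<rho>" using sv that by auto
      have "infdist \<alpha> (SV (\<lambda>z. poly p (exp z))) \<le> dist \<alpha> s" by (rule infdist_le[OF that])
      thus "\<epsilon> < norm (s - \<alpha>)" using inf by (simp add: dist_norm norm_minus_commute)
    qed
    have p0: "norm (poly p 0) < \<rho>" using svp[OF SV_p0] by blast
    have critf: "norm (poly p c) < \<rho> \<and> \<epsilon> < norm (poly p c - \<alpha>)" if "poly (pderiv p) c = 0" for c
      using svp[OF SV_crit[OF that]] .
    have alb: "norm \<alpha> < 2 * \<rho>" using al by simp
    have pSn: "degree p = Suc n" using dg dn by simp
    have crit3: "\<forall>c. poly (pderiv p) c = 0 \<longrightarrow> norm (poly p c - poly p 0) \<le> 3 * \<rho>"
    proof (intro allI impI)
      fix c assume "poly (pderiv p) c = 0"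
      hence "norm (poly p c) < \<rho>" using critf by blast
      thus "norm (poly p c - poly p 0) \<le> 3 * \<rho>"
        using p0 \<rho>2 norm_triangle_ineq4[of "poly p c" "poly p 0"] by linarith
    qed
    have r3: "norm (poly p u - poly p 0) \<le> 3 * \<rho>" if "poly p u = \<alpha>" for u
      using that alb p0 norm_triangle_ineq4[of \<alpha> "poly p 0"] by simp
    define M where "M = B * \<rho>"
    have "B * \<rho> \<ge> 1 * \<rho>" using B1 \<rho>2 by (intro mult_right_mono) auto
    hence M1: "2 * M \<ge> 1" using \<rho>2 unfolding M_def by linarith
    have rootsM: "\<forall>u. poly p u = \<alpha> \<longrightarrow> norm u \<le> M"
    proof (intro allI impI)
      fix u assume "poly p u = \<alpha>"
      hence "\<kappa> * norm u ^ Suc n \<le> of_nat (Suc n) * (3 * \<rho>)"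
        using root_bound(1)[OF kap lc pSn crit3 r3] by blast
      thus "norm u \<le> M" unfolding M_def B_def
        using pow_bound[of \<kappa> d \<rho> "norm u"] \<kappa> \<rho>2 dn by simp
    qed
    have critM: "\<forall>c. poly (pderiv p) c = 0 \<longrightarrow> \<epsilon> < norm (poly p c - \<alpha>) \<and> norm c \<le> M"
    proof (intro allI impI conjI)
      fix c assume c: "poly (pderiv p) c = 0"
      thus "\<epsilon> < norm (poly p c - \<alpha>)" using critf by blast
      have "\<kappa> * norm c ^ Suc n \<le> of_nat (Suc n) * (3 * \<rho>)"
        using root_bound(2)[OF kap lc pSn crit3 r3[OF e1]] c by blast
      thus "norm c \<le> M" unfolding M_def B_def
        using pow_bound[of \<kappa> d \<rho> "norm c"] \<kappa> \<rho>2 dn by simp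
    qed
    show "cmod (w1 - w2) > (\<epsilon> / \<rho>) ^ (d ^ 4)"
    proof (cases "exp w1 = exp w2")
      case True
      then obtain m :: int where m: "w1 = w2 + (of_int (2 * m) * pi) * \<i>" by (auto simp: exp_eq)
      have "m \<noteq> 0" using m ne by auto
      hence "norm (w1 - w2) = 2 * pi * \<bar>real_of_int m\<bar>" using m
        by (simp add: norm_mult)
      moreover have "\<bar>real_of_int m\<bar> \<ge> 1" using \<open>m \<noteq> 0\<close> by linarith
      moreover have "2 * pi * 1 \<le> 2 * pi * \<bar>real_of_int m\<bar>"
        using \<open>\<bar>real_of_int m\<bar> \<ge> 1\<close> pi_gt3 by (intro mult_left_mono) auto
      ultimately have "norm (w1 - w2) \<ge> 2 * pi" by simp
      thus ?thesis using \<delta> \<delta>p pi_gt3 unfolding \<delta>_def by linarith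
    next
      case False
      have sb: "\<epsilon> ^ n \<le> norm (exp w1 - exp w2) * (2 * M) ^ (Suc n * Suc n)"
        using sep_bound[OF lc pSn critM rootsM e1 e2 False] \<epsilon> M1 by simp
      define h where "h = w1 - w2"
      show ?thesis
      proof (cases "norm h \<le> 1 / 2")
        case False
        thus ?thesis using \<delta> \<delta>p unfolding \<delta>_def h_def by linarith
      next
        case True
        have "exp w1 - exp w2 = exp w2 * (exp h - 1)"
          by (simp add: h_def exp_diff algebra_simps)
        hence "norm (exp w1 - exp w2) = norm (exp w2) * norm (exp h - 1)" by (simp add: norm_mult)
        also have "\<dots> \<le> M * (3 / 2 * norm h)"
          using norm_exp_bounds(2)[OF True] rootsM e2 M1 by (intro mult_mono) auto
        finally have "norm (exp w1 - exp w2) \<le> M * (3 / 2 * norm h)" .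
        hence "\<epsilon> ^ n \<le> M * (3 / 2 * norm h) * (2 * M) ^ (Suc n * Suc n)"
          using sb M1 by (smt (verit) mult_right_mono zero_le_power)
        also have "\<dots> \<le> norm h * (2 * M) ^ k"
        proof -
          have "M * (3 / 2 * norm h) \<le> norm h * (2 * M)" using M1 by (simp add: mult_right_mono)
          hence "M * (3 / 2 * norm h) * (2 * M) ^ (Suc n * Suc n) \<le> norm h * (2 * M) * (2 * M) ^ (Suc n * Suc n)"
            using M1 by (intro mult_right_mono) auto
          thus ?thesis by (simp add: k_def dn mult_ac)
        qed
        finally have hb: "\<epsilon> ^ n \<le> norm h * (2 * M) ^ k" .
        have kd: "k + 1 \<le> d ^ 4"
        proof -
          define D where "D = d * d"
          have D4: "D \<ge> 2 * 2" unfolding D_def using assms by (intro mult_le_mono) auto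
          have "d ^ 4 = D * D" unfolding D_def by (simp add: power4_eq_xxxx)
          moreover have "D * D \<ge> D * 4" using D4 by (intro mult_le_mono2) simp
          ultimately show ?thesis unfolding k_def D_def[symmetric] using D4 by linarith
        qed
        have "(2 * M) ^ k = (2 * B) ^ k * \<rho> ^ k" by (simp add: M_def power_mult_distrib mult_ac)
        also have "\<dots> < \<rho> * \<rho> ^ k"
          using \<rho> \<rho>2 unfolding \<rho>0_def by (intro mult_strict_right_mono) auto
        also have "\<dots> = \<rho> ^ (k + 1)" by simp
        also have "\<dots> \<le> \<rho> ^ (d ^ 4)" using kd \<rho>2 by (intro power_increasing) auto
        finally have big: "(2 * M) ^ k < \<rho> ^ (d ^ 4)" .
        have "d \<le> d ^ 4" using self_le_power[of d 4] assms by simp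
        hence nd4: "n \<le> d ^ 4" using dn by simp
        have "\<delta> ^ (d ^ 4) = \<epsilon> ^ (d ^ 4) / \<rho> ^ (d ^ 4)" by (simp add: \<delta>_def power_divide)
        also have "\<dots> \<le> \<epsilon> ^ n / \<rho> ^ (d ^ 4)"
          using \<epsilon> \<rho>2 nd4 by (intro divide_right_mono power_decreasing) auto
        also have "\<dots> < \<epsilon> ^ n / (2 * M) ^ k"
        proof -
          have "(2 * M) ^ k > 0" using M1 by simp
          moreover have "\<rho> ^ (d ^ 4) > 0" using \<rho>2 by simp
          ultimately show ?thesis using big \<epsilon> by (intro divide_strict_left_mono) auto
        qed
        also have "\<dots> \<le> norm h"
          using hb M1 by (simp add: divide_le_eq)
        finally show ?thesis unfolding \<delta>_def h_def .
      qed
    qed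
  qed
qed

end
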